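(* Let $K\in\mathbb{R}^{n\times n}$ be any positive semi-definite matrix, $\widetilde{S}\in\mathbb{R}^{n\times m}$, $\lambda>0$, and let $f:\mathbb{R}^n\to\mathbb{R}$ be convex and differentiable with $\mu$-Lipschitz gradient. Let $w^*$ be any minimizer of $w\mapsto f(Kw)+\frac{\lambda}{2}w^\top Kw$ over $\mathbb{R}^n$, let $\alpha^*$ be any minimizer of $\alpha\mapsto f(K\widetilde{S}\alpha)+\frac{\lambda}{2}\alpha^\top\widetilde{S}^\top K\widetilde{S}\alpha$ over $\mathbb{R}^m$, and define $\widetilde{w}=-\frac{1}{\lambda}\nabla f(K\widetilde{S}\alpha^* )$. If $\lambda\ge 2\mu Z_f^2$ with $Z_f=Z_f(K^{1/2},K^{1/2}\widetilde{S})$, then $$\|K^{1/2}(\widetilde{w}-w^* )\|_2\le\sqrt{\frac{\mu}{2\lambda}}\,Z_f\,\|K^{1/2}w^*\|_2 .$$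
   Context: $K^{1/2}$ is the p.s.d. square root of $K$. $f^*(z)=\sup_w\{w^\top z-f(w)\}$ is the Fenchel conjugate of $f$ with domain $\mathrm{dom} f^*$. For a matrix $B\in\mathbb{R}^{n\times p}$ and $S\in\mathbb{R}^{p\times m}$: let $x_B^*$ be the minimizer of $x\mapsto f(Bx)+\frac{\lambda}{2}\|x\|_2^2$, $z^*=\nabla f(Bx_B^* )$, $P_S=S(S^\top S)^\dagger S^\top$, $P_S^\perp=I_p-P_S$, and $Z_f(B,S)=\sup_{\Delta\in(\mathrm{dom} f^*-z^* ),\,\Delta\ne0}\left(\frac{\Delta^\top BP_S^\perp B^\top\Delta}{\|\Delta\|_2^2}\right)^{1/2}$. *)

theory Defs
  imports "HOL-Analysis.Analysis"
begin

definition psd :: "real^'n^'n \<Rightarrow> bool" where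
  "psd K \<longleftrightarrow> transpose K = K \<and> (\<forall>x. 0 \<le> x \<bullet> (K *v x))"

definition msqrt :: "real^'n^'n \<Rightarrow> real^'n^'n" where
  "msqrt K = (THE R. psd R \<and> R ** R = K)"

definition pinv :: "real^'n^'m \<Rightarrow> real^'m^'n" where
  "pinv A = (THE X. A ** X ** A = A \<and> X ** A ** X = X \<and>
                    transpose (A ** X) = A ** X \<and> transpose (X ** A) = X ** A)"

definition grad :: "(real^'n \<Rightarrow> real) \<Rightarrow> real^'n \<Rightarrow> real^'n" where
  "grad f x = (THE g. (f has_derivative (\<lambda>h. g \<bullet> h)) (at x))"

text \<open>Domain of the Fenchel conjugate: points where the supremum is finite.\<close>
definition conj_dom :: "(real^'n \<Rightarrow> real) \<Rightarrow> (real^'n) set" where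
  "conj_dom f = {z. \<exists>c. \<forall>w. w \<bullet> z - f w \<le> c}"

text \<open>The quantity Z_f(B,S); the supremum over an empty set is taken to be 0.\<close>
definition Zf :: "(real^'n \<Rightarrow> real) \<Rightarrow> real \<Rightarrow> real^'p^'n \<Rightarrow> real^'k^'p \<Rightarrow> real" where
  "Zf f lam B S =
    (let xB = (SOME x. \<forall>y. f (B *v x) + lam / 2 * (norm x)^2 \<le> f (B *v y) + lam / 2 * (norm y)^2);
         z = grad f (B *v xB);
         Pperp = mat 1 - S ** pinv (transpose S ** S) ** transpose S
     in Sup (insert 0 {sqrt ((\<Delta> \<bullet> ((B ** Pperp ** transpose B) *v \<Delta>)) / (norm \<Delta>)^2) | \<Delta>.
                          \<Delta> \<in> (\<lambda>d. d - z) ` conj_dom f \<and> \<Delta> \<noteq> 0}))"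

end

theory Submission
  imports Defs
begin



lemma grad_works:
  fixes f :: "real^'n \<Rightarrow> real"
  assumes "f differentiable (at x)"
  shows "(f has_derivative (\<lambda>h. grad f x \<bullet> h)) (at x)"
proof -
  obtain D where D: "(f has_derivative D) (at x)" using assms differentiable_def by blast
  have lD: "linear D" using D has_derivative_linear by blast
  define g where "g = adjoint D 1"
  have Dg: "D = (\<lambda>h. g \<bullet> h)"
    using adjoint_works[OF lD, of _ 1] by (auto simp: g_def inner_commute)
  have "(THE g. (f has_derivative (\<lambda>h. g \<bullet> h)) (at x)) = g"
  proof (rule the_equality)
    show "(f has_derivative (\<lambda>h. g \<bullet> h)) (at x)" using D Dg by simp
  next
    fix g' assume "(f has_derivative (\<lambda>h. g' \<bullet> h)) (at x)"
    then have "(\<lambda>h. g' \<bullet> h) = (\<lambda>h. g \<bullet> h)" using D Dg has_derivative_unique by blast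
    then have "g' \<bullet> (g' - g) = g \<bullet> (g' - g)" by metis
    then have "(g' - g) \<bullet> (g' - g) = 0" by (simp add: inner_diff_left inner_diff_right inner_commute)
    then show "g' = g" by simp
  qed
  then show ?thesis using D Dg by (simp add: grad_def)
qed




lemma line_deriv:
  fixes f :: "real^'n \<Rightarrow> real"
  assumes "\<forall>x. f differentiable (at x)"
  shows "((\<lambda>t. f (x + t *\<^sub>R d)) has_real_derivative (grad f (x + t *\<^sub>R d) \<bullet> d)) (at t)"
proof -
  have 1: "((\<lambda>t. x + t *\<^sub>R d) has_derivative (\<lambda>s. s *\<^sub>R d)) (at t)"
    by (auto intro!: derivative_eq_intros)
  have 2: "(f has_derivative (\<lambda>h. grad f (x + t *\<^sub>R d) \<bullet> h)) (at (x + t *\<^sub>R d))"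
    using grad_works assms by blast
  have "((\<lambda>t. f (x + t *\<^sub>R d)) has_derivative (\<lambda>s. grad f (x + t *\<^sub>R d) \<bullet> (s *\<^sub>R d))) (at t)"
    using has_derivative_compose[OF 1 2] by (simp add: o_def)
  moreover have "(\<lambda>s. grad f (x + t *\<^sub>R d) \<bullet> (s *\<^sub>R d)) = (*) (grad f (x + t *\<^sub>R d) \<bullet> d)"
    by (auto simp: fun_eq_iff)
  ultimately show ?thesis by (simp add: has_field_derivative_def)
qed

lemma tangent_ineq:
  fixes f :: "real^'n \<Rightarrow> real"
  assumes cv: "convex_on UNIV f" and df: "\<forall>x. f differentiable (at x)"
  shows "f y \<ge> f x + grad f x \<bullet> (y - x)"
proof -
  define d where "d = y - x"
  define \<phi> where "\<phi> = (\<lambda>t::real. f (x + t *\<^sub>R d))"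
  have "convex_on UNIV \<phi>"
  proof (rule convex_onI)
    fix t a b :: real assume "t > 0" "t < 1"
    have "x + ((1 - t) *\<^sub>R a + t *\<^sub>R b) *\<^sub>R d = (1 - t) *\<^sub>R (x + a *\<^sub>R d) + t *\<^sub>R (x + b *\<^sub>R d)"
      by (simp add: algebra_simps)
    then show "\<phi> ((1 - t) *\<^sub>R a + t *\<^sub>R b) \<le> (1 - t) * \<phi> a + t * \<phi> b"
      unfolding \<phi>_def using convex_onD[OF cv, of t] \<open>t>0\<close> \<open>t<1\<close> by simp
  qed auto
  moreover have "(\<phi> has_real_derivative (grad f x \<bullet> d)) (at 0 within UNIV)"
    using line_deriv[OF df, of x d 0] unfolding \<phi>_def by simp
  ultimately have "\<phi> 1 - \<phi> 0 \<ge> (grad f x \<bullet> d) * (1 - 0)"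
    by (intro convex_on_imp_above_tangent) auto
  then show ?thesis unfolding \<phi>_def d_def by simp
qed

lemma descent_ineq:
  fixes f :: "real^'n \<Rightarrow> real"
  assumes df: "\<forall>x. f differentiable (at x)"
    and lip: "\<forall>x y. norm (grad f x - grad f y) \<le> mu * norm (x - y)"
  shows "f y \<le> f x + grad f x \<bullet> (y - x) + mu / 2 * (norm (y - x))^2"
proof -
  define d where "d = y - x"
  define h where "h = (\<lambda>t::real. f (x + t *\<^sub>R d) - t * (grad f x \<bullet> d) - mu / 2 * t^2 * (norm d)^2)"
  have "h 0 \<ge> h 1"
  proof (rule DERIV_nonpos_imp_nonincreasing[of 0 1 h])
    fix t :: real assume t: "0 \<le> t" "t \<le> 1"
    have D: "(h has_real_derivative (grad f (x + t *\<^sub>R d) \<bullet> d - grad f x \<bullet> d - mu * t * (norm d)^2)) (at t)"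
    proof -
      have L: "((\<lambda>t. f (x + t *\<^sub>R d)) has_real_derivative (grad f (x + t *\<^sub>R d) \<bullet> d)) (at t)"
        by (rule line_deriv[OF df])
      have P1: "((\<lambda>t. t * (grad f x \<bullet> d)) has_real_derivative (grad f x \<bullet> d)) (at t)"
        by (auto intro!: derivative_eq_intros)
      have P2: "((\<lambda>t. mu / 2 * t^2 * (norm d)^2) has_real_derivative (mu * t * (norm d)^2)) (at t)"
        by (auto intro!: derivative_eq_intros)
      show ?thesis using DERIV_diff[OF DERIV_diff[OF L P1] P2] unfolding h_def .
    qed
    have "grad f (x + t *\<^sub>R d) \<bullet> d - grad f x \<bullet> d = (grad f (x + t *\<^sub>R d) - grad f x) \<bullet> d"
      by (simp add: inner_diff_left)
    also have "\<dots> \<le> norm (grad f (x + t *\<^sub>R d) - grad f x) * norm d"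
      by (rule norm_cauchy_schwarz)
    also have "\<dots> \<le> mu * norm (t *\<^sub>R d) * norm d"
      using lip[rule_format, of "x + t *\<^sub>R d" x] by (intro mult_right_mono) auto
    also have "\<dots> = mu * t * (norm d)^2" using t by (simp add: power2_eq_square)
    finally have le: "grad f (x + t *\<^sub>R d) \<bullet> d - grad f x \<bullet> d \<le> mu * t * (norm d)^2" .
    show "\<exists>y. (h has_real_derivative y) (at t) \<and> y \<le> 0"
      using D le by (intro exI[of _ "grad f (x + t *\<^sub>R d) \<bullet> d - grad f x \<bullet> d - mu * t * (norm d)^2"]) auto
  qed simp
  then show ?thesis unfolding h_def d_def by simp
qed




lemma one_sided:
  fixes f :: "real^'n \<Rightarrow> real"
  assumes cv: "convex_on UNIV f" and df: "\<forall>x. f differentiable (at x)"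
    and lip: "\<forall>x y. norm (grad f x - grad f y) \<le> mu * norm (x - y)" and mu: "mu > 0"
  shows "f y \<ge> f x + grad f x \<bullet> (y - x) + (norm (grad f y - grad f x))^2 / (2 * mu)"
proof -
  define \<delta> where "\<delta> = grad f y - grad f x"
  define w where "w = y - (1/mu) *\<^sub>R \<delta>"
  have t: "f w \<ge> f x + grad f x \<bullet> (w - x)" by (rule tangent_ineq[OF cv df])
  have d: "f w \<le> f y + grad f y \<bullet> (w - y) + mu / 2 * (norm (w - y))^2"
    by (rule descent_ineq[OF df lip])
  have e1: "grad f x \<bullet> (w - x) = grad f x \<bullet> (y - x) - (grad f x \<bullet> \<delta>) / mu"
    unfolding w_def by (simp add: inner_diff_right algebra_simps)
  have e2: "grad f y \<bullet> (w - y) = - (grad f y \<bullet> \<delta>) / mu"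
    unfolding w_def by (simp add: inner_diff_right algebra_simps)
  have e3: "mu / 2 * (norm (w - y))^2 = (norm \<delta>)^2 / (2 * mu)"
    unfolding w_def using mu by (simp add: power2_eq_square field_simps)
  have e4: "(norm \<delta>)^2 = grad f y \<bullet> \<delta> - grad f x \<bullet> \<delta>"
    unfolding \<delta>_def by (simp add: power2_norm_eq_inner inner_diff_left)
  have f1: "(grad f y \<bullet> \<delta>) / mu - (grad f x \<bullet> \<delta>) / mu = (norm \<delta>)^2 / mu" using e4
    by (simp add: diff_divide_distrib[symmetric])
  have f2: "(norm \<delta>)^2 / mu - (norm \<delta>)^2 / (2 * mu) = (norm \<delta>)^2 / (2 * mu)"
    using mu by (simp add: field_simps)
  have "f y \<ge> f x + grad f x \<bullet> (y - x) + (norm \<delta>)^2 / (2 * mu)"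
    using t d e1 e2 e3 f1 f2 by linarith
  then show ?thesis unfolding \<delta>_def .
qed

lemma cocoercive:
  fixes f :: "real^'n \<Rightarrow> real"
  assumes cv: "convex_on UNIV f" and df: "\<forall>x. f differentiable (at x)"
    and lip: "\<forall>x y. norm (grad f x - grad f y) \<le> mu * norm (x - y)"
  shows "(norm (grad f y - grad f x))^2 \<le> mu * ((grad f y - grad f x) \<bullet> (y - x))"
proof (cases "mu > 0")
  case True
  have 1: "f y \<ge> f x + grad f x \<bullet> (y - x) + (norm (grad f y - grad f x))^2 / (2 * mu)"
    by (rule one_sided[OF cv df lip True])
  have 2: "f x \<ge> f y + grad f y \<bullet> (x - y) + (norm (grad f x - grad f y))^2 / (2 * mu)"
    by (rule one_sided[OF cv df lip True])
  have n: "norm (grad f x - grad f y) = norm (grad f y - grad f x)" by (rule norm_minus_commute)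
  have "grad f x \<bullet> (y - x) + grad f y \<bullet> (x - y) = - ((grad f y - grad f x) \<bullet> (y - x))"
    by (simp add: inner_diff_left inner_diff_right algebra_simps)
  with 1 2 n have "(norm (grad f y - grad f x))^2 / mu \<le> (grad f y - grad f x) \<bullet> (y - x)"
    by (simp add: add_divide_distrib[symmetric])
  then show ?thesis using True by (simp add: divide_le_eq mult.commute)
next
  case False
  have "norm (grad f y - grad f x) \<le> mu * norm (y - x)" using lip by blast
  also have "\<dots> \<le> 0" using False by (simp add: mult_nonpos_nonneg)
  finally have "grad f y - grad f x = 0" by simp
  then show ?thesis by simp
qed




lemma eigvec_max:
  fixes f :: "'a::euclidean_space \<Rightarrow> 'a"
  assumes lf: "linear f" and sa: "\<forall>x y. f x \<bullet> y = x \<bullet> f y"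
    and V: "subspace V" and fV: "f ` V \<subseteq> V" and ne: "V \<noteq> {0}"
  shows "\<exists>v\<in>V. norm v = 1 \<and> f v = (v \<bullet> f v) *\<^sub>R v"
proof -
  define Sph where "Sph = V \<inter> sphere 0 1"
  have cS: "compact Sph" unfolding Sph_def using closed_subspace[OF V] compact_sphere by blast
  obtain x where x: "x \<in> V" "x \<noteq> 0" using ne V subspace_0 by blast
  have "(1 / norm x) *\<^sub>R x \<in> Sph" unfolding Sph_def using x V by (auto simp: subspace_scale)
  then have neS: "Sph \<noteq> {}" by blast
  have blf: "bounded_linear f" using lf linear_conv_bounded_linear by blast
  have cont: "continuous_on Sph (\<lambda>x. x \<bullet> f x)"
    by (intro continuous_intros linear_continuous_on blf)
  obtain v where v: "v \<in> Sph" and vmax: "\<forall>y\<in>Sph. y \<bullet> f y \<le> v \<bullet> f v"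
    using continuous_attains_sup[OF cS neS cont] by blast
  define m where "m = v \<bullet> f v"
  have vV: "v \<in> V" and nv: "norm v = 1" using v by (auto simp: Sph_def)
  have vv: "v \<bullet> v = 1" using nv by (simp add: norm_eq_1)
  have Q: "y \<bullet> f y \<le> m * (norm y)^2" if yV: "y \<in> V" for y
  proof (cases "y = 0")
    case True then show ?thesis by (simp add: linear_0[OF lf])
  next
    case False
    define c where "c = 1 / norm y"
    have "c *\<^sub>R y \<in> Sph" using yV False V by (auto simp: Sph_def c_def subspace_scale)
    then have "(c *\<^sub>R y) \<bullet> f (c *\<^sub>R y) \<le> m" using vmax m_def by blast
    then have "c^2 * (y \<bullet> f y) \<le> m" by (simp add: linear_scale[OF lf] power2_eq_square)
    then have "c^2 * (y \<bullet> f y) * (norm y)^2 \<le> m * (norm y)^2" by (simp add: mult_right_mono)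
    moreover have "c^2 * (norm y)^2 = 1" using False by (simp add: c_def field_simps)
    ultimately show ?thesis by (metis mult.assoc mult.commute mult.left_neutral)
  qed
  define u where "u = m *\<^sub>R v - f v"
  have uV: "u \<in> V" unfolding u_def using vV fV V by (auto intro: subspace_diff subspace_scale)
  have buv: "m * (u \<bullet> v) - u \<bullet> f v = (norm u)^2"
    by (simp add: u_def power2_norm_eq_inner inner_diff_left inner_diff_right algebra_simps)
  define c where "c = m * (norm u)^2 - u \<bullet> f u"
  have c0: "c \<ge> 0" using Q[OF uV] by (simp add: c_def)
  have key: "2 * s * (norm u)^2 \<le> s^2 * c" if s: "s > 0" for s
  proof -
    have "v - s *\<^sub>R u \<in> V" using vV uV V by (auto intro: subspace_diff subspace_scale)
    from Q[OF this] have q: "(v - s *\<^sub>R u) \<bullet> f (v - s *\<^sub>R u) \<le> m * (norm (v - s *\<^sub>R u))^2" .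
    have vfu: "v \<bullet> f u = u \<bullet> f v" using sa by (metis inner_commute)
    have e1: "(v - s *\<^sub>R u) \<bullet> f (v - s *\<^sub>R u) = m - 2 * s * (u \<bullet> f v) + s^2 * (u \<bullet> f u)"
      by (simp add: linear_diff[OF lf] linear_scale[OF lf] inner_diff_left inner_diff_right
          m_def vfu power2_eq_square algebra_simps)
    have e2: "(norm (v - s *\<^sub>R u))^2 = 1 - 2 * s * (u \<bullet> v) + s^2 * (norm u)^2"
      unfolding power2_norm_eq_inner
      by (simp add: inner_diff_left inner_diff_right vv power2_eq_square
          algebra_simps inner_commute)
    have "m - 2 * s * (u \<bullet> f v) + s^2 * (u \<bullet> f u) \<le> m * (1 - 2 * s * (u \<bullet> v) + s^2 * (norm u)^2)"
      using q e1 e2 by simp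
    then have "2 * s * (m * (u \<bullet> v) - u \<bullet> f v) \<le> s^2 * c"
      by (simp add: c_def algebra_simps)
    then show ?thesis using buv by simp
  qed
  have "u = 0"
  proof (rule ccontr)
    assume "u \<noteq> 0"
    then have nu: "(norm u)^2 > 0" by simp
    define s where "s = (norm u)^2 / (c + 1)"
    have sp: "s > 0" using nu c0 by (simp add: s_def)
    from key[OF sp] have "2 * s * (norm u)^2 \<le> s * (s * c)" by (simp add: power2_eq_square mult.assoc)
    then have "2 * (norm u)^2 \<le> s * c" using sp by simp
    also have "s * c < (norm u)^2" using nu c0 by (simp add: s_def field_simps)
    finally show False using nu by simp
  qed
  then have "f v = m *\<^sub>R v" by (simp add: u_def)
  then show ?thesis using vV nv m_def by blast
qed

lemma spectral_sub:
  fixes f :: "'a::euclidean_space \<Rightarrow> 'a"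
  assumes lf: "linear f" and sa: "\<forall>x y. f x \<bullet> y = x \<bullet> f y"
  shows "subspace V \<Longrightarrow> f ` V \<subseteq> V \<Longrightarrow> dim V = n \<Longrightarrow>
    \<exists>B. finite B \<and> B \<subseteq> V \<and> span B = V \<and> pairwise orthogonal B \<and>
        (\<forall>b\<in>B. norm b = 1 \<and> f b = (b \<bullet> f b) *\<^sub>R b)"
proof (induction n arbitrary: V)
  case 0
  then have "V = {0}" using subspace_0 by auto
  then show ?case by (intro exI[of _ "{}"]) auto
next
  case (Suc n)
  have ne: "V \<noteq> {0}" using Suc.prems(3) by auto
  obtain v where vV: "v \<in> V" and nv: "norm v = 1" and fv: "f v = (v \<bullet> f v) *\<^sub>R v"
    using eigvec_max[OF lf sa Suc.prems(1,2) ne] by blast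
  have vv: "v \<bullet> v = 1" using nv by (simp add: norm_eq_1)
  define W where "W = V \<inter> {x. x \<bullet> v = 0}"
  have sW: "subspace W" unfolding W_def
    using Suc.prems(1) by (auto simp: subspace_def inner_add_left)
  have fW: "f ` W \<subseteq> W"
  proof
    fix y assume "y \<in> f ` W"
    then obtain x where x: "x \<in> W" "y = f x" by blast
    have "f x \<bullet> v = x \<bullet> f v" using sa by blast
    also have "\<dots> = 0" using x(1) fv by (simp add: W_def) (metis inner_scaleR_right mult_zero_right)
    finally show "y \<in> W" using x Suc.prems(2) by (auto simp: W_def)
  qed
  have span_eq: "span (insert v W) = V"
  proof
    show "span (insert v W) \<subseteq> V" using span_minimal[of "insert v W" V] vV Suc.prems(1) W_def by auto
    show "V \<subseteq> span (insert v W)"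
    proof
      fix x assume xV: "x \<in> V"
      have "x - (x \<bullet> v) *\<^sub>R v \<in> W" using xV vV Suc.prems(1) vv
        by (auto simp: W_def inner_diff_left intro: subspace_diff subspace_scale)
      then have 1: "x - (x \<bullet> v) *\<^sub>R v \<in> span (insert v W)" by (simp add: span_base)
      have 2: "(x \<bullet> v) *\<^sub>R v \<in> span (insert v W)" by (simp add: span_base span_scale)
      have "x = (x - (x \<bullet> v) *\<^sub>R v) + (x \<bullet> v) *\<^sub>R v" by simp
      then show "x \<in> span (insert v W)" using span_add[OF 1 2] by metis
    qed
  qed
  have "span W = W" using sW by simp
  moreover have "v \<notin> W" using vv by (simp add: W_def)
  ultimately have "v \<notin> span W" using span_eq_iff[of W] sW by metis
  then have "dim V = dim W + 1" using span_eq dim_insert[of v W] dim_span[of "insert v W"] by simp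
  then have "dim W = n" using Suc.prems(3) by simp
  then obtain B where B: "finite B" "B \<subseteq> W" "span B = W" "pairwise orthogonal B"
      "\<forall>b\<in>B. norm b = 1 \<and> f b = (b \<bullet> f b) *\<^sub>R b"
    using Suc.IH[OF sW fW] by blast
  show ?case
  proof (intro exI[of _ "insert v B"] conjI)
    show "finite (insert v B)" using B by simp
    show "insert v B \<subseteq> V" using B vV W_def by auto
    show "span (insert v B) = V"
    proof
      show "span (insert v B) \<subseteq> V" using span_minimal[of "insert v B" V] vV B Suc.prems(1) W_def by auto
      have "insert v W \<subseteq> span (insert v B)"
        using B(3) span_mono[of B "insert v B"] span_base[of v "insert v B"] by auto
      then have "span (insert v W) \<subseteq> span (insert v B)" using span_minimal subspace_span by blast
      then show "V \<subseteq> span (insert v B)" using span_eq by simp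
    qed
    show "pairwise orthogonal (insert v B)"
      using B(2,4) unfolding pairwise_insert
      by (auto simp: W_def orthogonal_def inner_commute)
    show "\<forall>b\<in>insert v B. norm b = 1 \<and> f b = (b \<bullet> f b) *\<^sub>R b" using B(5) nv fv by auto
  qed
qed




definition onb :: "(real^'n) set \<Rightarrow> bool" where
  "onb B \<longleftrightarrow> finite B \<and> pairwise orthogonal B \<and> (\<forall>b\<in>B. norm b = 1) \<and> span B = UNIV"

lemma onb_inner:
  assumes "onb B" "b \<in> B"
  shows "(\<Sum>c\<in>B. g c *\<^sub>R c) \<bullet> b = g b"
proof -
  have fin: "finite B" using assms by (simp add: onb_def)
  have "(\<Sum>c\<in>B. g c *\<^sub>R c) \<bullet> b = (\<Sum>c\<in>B. g c * (c \<bullet> b))" by (simp add: inner_sum_left)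
  also have "\<dots> = (\<Sum>c\<in>B. if c = b then g b else 0)"
  proof (rule sum.cong)
    fix c assume c: "c \<in> B"
    show "g c * (c \<bullet> b) = (if c = b then g b else 0)"
    proof (cases "c = b")
      case True then show ?thesis using assms by (simp add: onb_def norm_eq_1)
    next
      case False then show ?thesis using assms c by (auto simp: onb_def pairwise_def orthogonal_def)
    qed
  qed simp
  also have "\<dots> = g b" using fin assms(2) by simp
  finally show ?thesis .
qed

lemma onb_expand:
  assumes "onb B"
  shows "x = (\<Sum>b\<in>B. (x \<bullet> b) *\<^sub>R b)"
proof -
  have fin: "finite B" using assms by (simp add: onb_def)
  have "x \<in> span B" using assms by (simp add: onb_def)
  then obtain u where u: "(\<Sum>c\<in>B. u c *\<^sub>R c) = x" using span_finite[OF fin] by auto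
  have "\<And>b. b \<in> B \<Longrightarrow> x \<bullet> b = u b" using onb_inner[OF assms] u by metis
  then show ?thesis using u by (metis (no_types, lifting) sum.cong)
qed

lemma selfadj_of_sym:
  fixes M :: "real^'n^'n"
  assumes "transpose M = M"
  shows "(M *v x) \<bullet> y = x \<bullet> (M *v y)"
proof -
  have "x \<bullet> (M *v y) = (x v* M) \<bullet> y" by (simp add: dot_lmul_matrix)
  also have "x v* M = transpose M *v x" by simp
  finally show ?thesis using assms by simp
qed

lemma sym_of_selfadj:
  fixes M :: "real^'n^'n"
  assumes "\<And>x y. (M *v x) \<bullet> y = x \<bullet> (M *v y)"
  shows "transpose M = M"
proof -
  have "transpose M *v x = M *v x" for x
  proof -
    have "\<forall>y. (transpose M *v x - M *v x) \<bullet> y = 0"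
      using assms by (simp add: inner_diff_left dot_lmul_matrix)
    then have "(transpose M *v x - M *v x) \<bullet> (transpose M *v x - M *v x) = 0" by blast
    then show ?thesis by simp
  qed
  then show ?thesis by (simp add: matrix_eq)
qed

lemma eigbasis:
  fixes A :: "real^'n^'n"
  assumes "transpose A = A"
  shows "\<exists>B. onb B \<and> (\<forall>b\<in>B. A *v b = (b \<bullet> (A *v b)) *\<^sub>R b)"
proof -
  have sa: "\<forall>x y. (A *v x) \<bullet> y = x \<bullet> (A *v y)" using selfadj_of_sym[OF assms] by blast
  have "\<exists>B. finite B \<and> B \<subseteq> UNIV \<and> span B = UNIV \<and> pairwise orthogonal B \<and>
        (\<forall>b\<in>B. norm b = 1 \<and> A *v b = (b \<bullet> (A *v b)) *\<^sub>R b)"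
    by (rule spectral_sub[OF matrix_vector_mul_linear sa]) auto
  then show ?thesis unfolding onb_def by blast
qed

definition fc :: "real^'n^'n \<Rightarrow> (real^'n) set \<Rightarrow> (real \<Rightarrow> real) \<Rightarrow> real^'n^'n" where
  "fc A B \<phi> = matrix (\<lambda>x. \<Sum>b\<in>B. (\<phi> (b \<bullet> (A *v b)) * (x \<bullet> b)) *\<^sub>R b)"

lemma lin_sumform: "linear (\<lambda>x::real^'n. \<Sum>b\<in>B. (g b * (x \<bullet> b)) *\<^sub>R b)"
  by (rule linearI) (simp_all add: inner_add_left distrib_left scaleR_add_left sum.distrib
      scaleR_sum_right algebra_simps)

lemma fc_apply: "fc A B \<phi> *v x = (\<Sum>b\<in>B. (\<phi> (b \<bullet> (A *v b)) * (x \<bullet> b)) *\<^sub>R b)"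
  unfolding fc_def using fun_cong[OF matrix_vector_mul(2)[OF lin_sumform[of "\<lambda>b. \<phi> (b \<bullet> (A *v b))" B]]] by simp

lemma fc_mult:
  assumes "onb B"
  shows "fc A B \<phi> ** fc A B \<psi> = fc A B (\<lambda>t. \<phi> t * \<psi> t)"
proof -
  have "fc A B \<phi> *v (fc A B \<psi> *v x) = fc A B (\<lambda>t. \<phi> t * \<psi> t) *v x" for x
  proof -
    have "\<And>b. b \<in> B \<Longrightarrow> (fc A B \<psi> *v x) \<bullet> b = \<psi> (b \<bullet> (A *v b)) * (x \<bullet> b)"
      unfolding fc_apply by (rule onb_inner[OF assms])
    then show ?thesis unfolding fc_apply[of A B \<phi>] fc_apply[of A B "\<lambda>t. \<phi> t * \<psi> t"]
      by (intro sum.cong) auto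
  qed
  then show ?thesis by (simp add: matrix_eq matrix_vector_mul_assoc)
qed

lemma fc_sym: "transpose (fc A B \<phi>) = fc A B \<phi>"
proof (rule sym_of_selfadj)
  fix x y
  show "(fc A B \<phi> *v x) \<bullet> y = x \<bullet> (fc A B \<phi> *v y)"
    unfolding fc_apply by (simp add: inner_sum_left inner_sum_right inner_commute mult.commute mult.left_commute)
qed

lemma fc_cong:
  assumes "\<And>b. b \<in> B \<Longrightarrow> \<phi> (b \<bullet> (A *v b)) = \<psi> (b \<bullet> (A *v b))"
  shows "fc A B \<phi> = fc A B \<psi>"
  unfolding fc_def using assms by (metis (no_types, lifting) sum.cong)

lemma fc_id:
  assumes "onb B" "\<forall>b\<in>B. A *v b = (b \<bullet> (A *v b)) *\<^sub>R b"
  shows "fc A B (\<lambda>t. t) = A"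
proof -
  have "A *v x = fc A B (\<lambda>t. t) *v x" for x
  proof -
    have "A *v x = A *v (\<Sum>b\<in>B. (x \<bullet> b) *\<^sub>R b)" using onb_expand[OF assms(1)] by metis
    also have "\<dots> = (\<Sum>b\<in>B. (x \<bullet> b) *\<^sub>R (A *v b))"
      by (simp add: linear_sum[OF matrix_vector_mul_linear] linear_scale[OF matrix_vector_mul_linear] o_def)
    also have "\<dots> = fc A B (\<lambda>t. t) *v x" unfolding fc_apply
    proof (intro sum.cong refl)
      fix b assume "b \<in> B"
      then have e: "A *v b = (b \<bullet> (A *v b)) *\<^sub>R b" using assms(2) by blast
      show "(x \<bullet> b) *\<^sub>R (A *v b) = (b \<bullet> (A *v b) * (x \<bullet> b)) *\<^sub>R b"
        by (subst e) (simp add: mult.commute)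
    qed
    finally show ?thesis .
  qed
  then show ?thesis by (simp add: matrix_eq)
qed




lemma psd_selfadj: "psd R \<Longrightarrow> (R *v x) \<bullet> y = x \<bullet> (R *v y)"
  unfolding psd_def using selfadj_of_sym by blast

lemma sqrt_on_eig:
  fixes R K :: "real^'n^'n"
  assumes R: "psd R" "R ** R = K" and eb: "K *v b = k *\<^sub>R b" and k: "k \<ge> 0"
  shows "R *v b = sqrt k *\<^sub>R b"
proof -
  have RR: "R *v (R *v x) = K *v x" for x using R(2) by (simp add: matrix_vector_mul_assoc)
  show ?thesis
  proof (cases "k = 0")
    case True
    have "(R *v b) \<bullet> (R *v b) = b \<bullet> (R *v (R *v b))" using psd_selfadj[OF R(1)] by blast
    also have "\<dots> = 0" using RR eb True by simp
    finally show ?thesis using True by simp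
  next
    case False
    then have kp: "sqrt k > 0" using k by simp
    define w where "w = R *v b - sqrt k *\<^sub>R b"
    have "R *v w = K *v b - sqrt k *\<^sub>R (R *v b)"
      by (simp add: w_def RR matrix_vector_mult_diff_distrib matrix_vector_mult_scaleR)
    also have "\<dots> = (- sqrt k) *\<^sub>R w"
    proof -
      have "K *v b = (sqrt k * sqrt k) *\<^sub>R b" using eb k by simp
      then show ?thesis by (simp add: w_def scaleR_diff_right)
    qed
    finally have Rw: "R *v w = (- sqrt k) *\<^sub>R w" .
    have "0 \<le> w \<bullet> (R *v w)" using R(1) by (simp add: psd_def)
    also have "\<dots> = - sqrt k * (w \<bullet> w)" by (simp add: Rw)
    finally have "w \<bullet> w \<le> 0" using kp by (simp add: mult_le_0_iff)
    then have "w = 0" by (metis inner_eq_zero_iff inner_ge_zero order_antisym)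
    then show ?thesis by (simp add: w_def)
  qed
qed

lemma msqrt_char:
  fixes K :: "real^'n^'n"
  assumes K: "psd K"
  shows "psd (msqrt K) \<and> msqrt K ** msqrt K = K"
proof -
  obtain B where B: "onb B" and eig: "\<forall>b\<in>B. K *v b = (b \<bullet> (K *v b)) *\<^sub>R b"
    using eigbasis[of K] K by (auto simp: psd_def)
  have e0: "\<And>b. 0 \<le> b \<bullet> (K *v b)" using K by (simp add: psd_def)
  define R0 where "R0 = fc K B sqrt"
  have p: "psd R0"
    unfolding psd_def
  proof
    show "transpose R0 = R0" by (simp add: R0_def fc_sym)
    show "\<forall>x. 0 \<le> x \<bullet> (R0 *v x)"
      by (simp add: R0_def fc_apply inner_sum_right e0 sum_nonneg mult.assoc)
  qed
  have sq: "R0 ** R0 = K"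
  proof -
    have "R0 ** R0 = fc K B (\<lambda>t. sqrt t * sqrt t)" by (simp add: R0_def fc_mult[OF B])
    also have "\<dots> = fc K B (\<lambda>t. t)" by (rule fc_cong) (simp add: e0)
    also have "\<dots> = K" by (rule fc_id[OF B eig])
    finally show ?thesis .
  qed
  have uniq: "R = R0" if R: "psd R" "R ** R = K" for R
  proof -
    have "R *v x = R0 *v x" for x
    proof -
      have "R *v x = R *v (\<Sum>b\<in>B. (x \<bullet> b) *\<^sub>R b)" using onb_expand[OF B] by metis
      also have "\<dots> = (\<Sum>b\<in>B. (x \<bullet> b) *\<^sub>R (R *v b))"
        by (simp add: linear_sum[OF matrix_vector_mul_linear] linear_scale[OF matrix_vector_mul_linear] o_def)
      also have "\<dots> = R0 *v x" unfolding R0_def fc_apply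
      proof (intro sum.cong refl)
        fix b assume "b \<in> B"
        then have "R *v b = sqrt (b \<bullet> (K *v b)) *\<^sub>R b"
          using sqrt_on_eig[OF R _ e0] eig by blast
        then show "(x \<bullet> b) *\<^sub>R (R *v b) = (sqrt (b \<bullet> (K *v b)) * (x \<bullet> b)) *\<^sub>R b"
          by (simp add: mult.commute)
      qed
      finally show ?thesis .
    qed
    then show ?thesis by (simp add: matrix_eq)
  qed
  have "msqrt K = R0" unfolding msqrt_def
  proof (rule the_equality)
    show "psd R0 \<and> R0 ** R0 = K" using p sq by blast
    fix R assume "psd R \<and> R ** R = K"
    then show "R = R0" using uniq by blast
  qed
  then show ?thesis using p sq by simp
qed




lemma penrose_unique:
  fixes A :: "real^'n^'m" and X Y :: "real^'m^'n"
  assumes X: "A ** X ** A = A" "X ** A ** X = X" "transpose (A ** X) = A ** X" "transpose (X ** A) = X ** A"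
    and Y: "A ** Y ** A = A" "Y ** A ** Y = Y" "transpose (A ** Y) = A ** Y" "transpose (Y ** A) = Y ** A"
  shows "X = Y"
proof -
  have AX: "A ** X = A ** Y"
  proof -
    have "A ** X = (A ** Y ** A) ** X" using Y(1) by simp
    also have "\<dots> = (A ** Y) ** (A ** X)" by (simp add: matrix_mul_assoc)
    also have "\<dots> = transpose (A ** Y) ** transpose (A ** X)" using X(3) Y(3) by simp
    also have "\<dots> = transpose ((A ** X) ** (A ** Y))" by (simp add: matrix_transpose_mul)
    also have "(A ** X) ** (A ** Y) = A ** Y" using X(1) by (simp add: matrix_mul_assoc)
    finally show ?thesis using Y(3) by simp
  qed
  have XA: "X ** A = Y ** A"
  proof -
    have "X ** A = X ** (A ** Y ** A)" using Y(1) by simp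
    also have "\<dots> = (X ** A) ** (Y ** A)" by (simp add: matrix_mul_assoc)
    also have "\<dots> = transpose (X ** A) ** transpose (Y ** A)" using X(4) Y(4) by simp
    also have "\<dots> = transpose ((Y ** A) ** (X ** A))" by (simp add: matrix_transpose_mul)
    also have "(Y ** A) ** (X ** A) = Y ** A" using X(1) by (metis matrix_mul_assoc)
    finally show ?thesis using Y(4) by simp
  qed
  have "X = X ** (A ** X)" using X(2) by (simp add: matrix_mul_assoc)
  also have "\<dots> = (X ** A) ** Y" using AX by (simp add: matrix_mul_assoc)
  also have "\<dots> = Y ** A ** Y" using XA by simp
  also have "\<dots> = Y" using Y(2) by simp
  finally show ?thesis .
qed

lemma pinv_char:
  fixes M :: "real^'n^'n"
  assumes sym: "transpose M = M"
  shows "transpose (pinv M) = pinv M \<and> M ** pinv M ** M = M \<and> pinv M ** M ** pinv M = pinv M"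
proof -
  obtain B where B: "onb B" and eig: "\<forall>b\<in>B. M *v b = (b \<bullet> (M *v b)) *\<^sub>R b"
    using eigbasis[OF sym] by blast
  have Mfc: "M = fc M B (\<lambda>t. t)" using fc_id[OF B eig] by simp
  define X where "X = fc M B inverse"
  have MX: "M ** X = fc M B (\<lambda>t. t * inverse t)"
    by (subst Mfc) (simp add: X_def fc_mult[OF B])
  have XM: "X ** M = fc M B (\<lambda>t. t * inverse t)"
  proof -
    have "fc M B inverse ** fc M B (\<lambda>t. t) = X ** M" using fc_id[OF B eig] by (simp add: X_def)
    then have "X ** M = fc M B (\<lambda>t. inverse t * t)" by (simp add: fc_mult[OF B])
    also have "\<dots> = fc M B (\<lambda>t. t * inverse t)" by (simp add: mult.commute)
    finally show ?thesis .
  qed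
  have e1: "M ** X ** M = M"
  proof -
    have "M ** X ** M = fc M B (\<lambda>t. t * inverse t) ** fc M B (\<lambda>t. t)" using MX Mfc by metis
    also have "\<dots> = fc M B (\<lambda>t. t * inverse t * t)" by (simp add: fc_mult[OF B])
    also have "\<dots> = fc M B (\<lambda>t. t)" by (rule fc_cong) (case_tac "b \<bullet> (M *v b) = 0"; simp)
    finally show ?thesis using Mfc by metis
  qed
  have e2: "X ** M ** X = X"
  proof -
    have "X ** M ** X = fc M B (\<lambda>t. t * inverse t) ** fc M B inverse" using XM X_def by metis
    also have "\<dots> = fc M B (\<lambda>t. t * inverse t * inverse t)" by (simp add: fc_mult[OF B])
    also have "\<dots> = fc M B inverse" by (rule fc_cong) (case_tac "b \<bullet> (M *v b) = 0"; simp)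
    finally show ?thesis using X_def by metis
  qed
  have e3: "transpose (M ** X) = M ** X" using MX fc_sym by metis
  have e4: "transpose (X ** M) = X ** M" using XM fc_sym by metis
  have "pinv M = X" unfolding pinv_def
  proof (rule the_equality)
    show "M ** X ** M = M \<and> X ** M ** X = X \<and> transpose (M ** X) = M ** X \<and> transpose (X ** M) = X ** M"
      using e1 e2 e3 e4 by blast
    fix Y assume "M ** Y ** M = M \<and> Y ** M ** Y = Y \<and> transpose (M ** Y) = M ** Y \<and> transpose (Y ** M) = Y ** M"
    then show "Y = X" using penrose_unique[of M Y X] e1 e2 e3 e4 by blast
  qed
  then show ?thesis using e1 e2 fc_sym X_def by metis
qed




lemma quad_lin_zero:
  fixes a C :: real
  assumes "\<forall>t. 0 \<le> t * a + t^2 * C"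
  shows "a = 0"
proof (rule ccontr)
  assume a: "a \<noteq> 0"
  define t where "t = - a / (\<bar>C\<bar> + 1)"
  have pos: "\<bar>C\<bar> + 1 > 0" by simp
  define k where "k = \<bar>C\<bar> + 1"
  have k: "k > 0" by (simp add: k_def)
  have 1: "t * a = - (a^2 / k)" by (simp add: t_def k_def power2_eq_square)
  have 2: "t^2 * C = a^2 / k * (C / k)" by (simp add: t_def k_def power_divide power2_eq_square)
  have "t * a + t^2 * C = (a^2 / k) * (C / k - 1)" unfolding 1 2 using k by (simp add: field_simps)
  then have "t * a + t^2 * C = (a^2 / (\<bar>C\<bar> + 1)) * (C / (\<bar>C\<bar> + 1) - 1)" by (simp add: k_def)
  moreover have "a^2 / (\<bar>C\<bar> + 1) > 0" using a pos by simp
  moreover have "C / (\<bar>C\<bar> + 1) - 1 < 0" using pos by (simp add: field_simps)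
  ultimately have "t * a + t^2 * C < 0" by (metis mult_pos_neg)
  then show False using assms by (meson not_le)
qed

lemma opt_cond:
  fixes f :: "real^'n \<Rightarrow> real" and L :: "real^'a^'n" and Q :: "real^'a^'a"
  assumes df: "\<forall>x. f differentiable (at x)"
    and lip: "\<forall>x y. norm (grad f x - grad f y) \<le> mu * norm (x - y)"
    and Qs: "transpose Q = Q"
    and mn: "\<forall>w. f (L *v w0) + lam / 2 * (w0 \<bullet> (Q *v w0)) \<le> f (L *v w) + lam / 2 * (w \<bullet> (Q *v w))"
  shows "transpose L *v grad f (L *v w0) + lam *\<^sub>R (Q *v w0) = 0"
proof -
  define g where "g = grad f (L *v w0)"
  define v where "v = transpose L *v g + lam *\<^sub>R (Q *v w0)"
  have "v \<bullet> h = 0" for h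
  proof -
    define C where "C = mu / 2 * (norm (L *v h))^2 + lam / 2 * (h \<bullet> (Q *v h))"
    have "0 \<le> t * (v \<bullet> h) + t^2 * C" for t
    proof -
      have d: "f (L *v (w0 + t *\<^sub>R h)) \<le> f (L *v w0) + g \<bullet> (L *v (w0 + t *\<^sub>R h) - L *v w0)
              + mu / 2 * (norm (L *v (w0 + t *\<^sub>R h) - L *v w0))^2"
        unfolding g_def by (rule descent_ineq[OF df lip])
      have e1: "L *v (w0 + t *\<^sub>R h) - L *v w0 = t *\<^sub>R (L *v h)"
        by (simp add: matrix_vector_right_distrib matrix_vector_mult_scaleR)
      have e2: "g \<bullet> (L *v h) = (transpose L *v g) \<bullet> h"
        by (simp add: dot_lmul_matrix[symmetric] inner_commute)
      have qs: "w0 \<bullet> (Q *v h) = h \<bullet> (Q *v w0)" using selfadj_of_sym[OF Qs, of h w0] by (simp add: inner_commute)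
      have e3: "(w0 + t *\<^sub>R h) \<bullet> (Q *v (w0 + t *\<^sub>R h)) = w0 \<bullet> (Q *v w0) + 2 * t * (h \<bullet> (Q *v w0)) + t^2 * (h \<bullet> (Q *v h))"
        by (simp add: matrix_vector_right_distrib matrix_vector_mult_scaleR inner_add_left inner_add_right qs
            power2_eq_square algebra_simps)
      have m: "f (L *v w0) + lam / 2 * (w0 \<bullet> (Q *v w0)) \<le> f (L *v (w0 + t *\<^sub>R h)) + lam / 2 * ((w0 + t *\<^sub>R h) \<bullet> (Q *v (w0 + t *\<^sub>R h)))"
        using mn by blast
      have vh: "v \<bullet> h = (transpose L *v g) \<bullet> h + lam * (h \<bullet> (Q *v w0))"
        by (simp add: v_def inner_add_left inner_commute[of "Q *v w0" h])
      have nrm: "(norm (t *\<^sub>R (L *v h)))^2 = t^2 * (norm (L *v h))^2" by (simp add: power_mult_distrib)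
      have A1: "f (L *v (w0 + t *\<^sub>R h)) \<le> f (L *v w0) + t * (g \<bullet> (L *v h)) + mu / 2 * (t^2 * (norm (L *v h))^2)"
        using d unfolding e1 nrm by simp
      have A2: "f (L *v w0) \<le> f (L *v (w0 + t *\<^sub>R h)) + lam / 2 * (2 * t * (h \<bullet> (Q *v w0))) + lam / 2 * (t^2 * (h \<bullet> (Q *v h)))"
        using m unfolding e3 by (simp add: distrib_left)
      have vh': "v \<bullet> h = g \<bullet> (L *v h) + lam * (h \<bullet> (Q *v w0))" using vh e2 by simp
      show ?thesis using A1 A2 unfolding vh' C_def by (simp add: algebra_simps)
    qed
    then show ?thesis using quad_lin_zero by blast
  qed
  then have "v \<bullet> v = 0" by blast
  then show ?thesis by (simp add: v_def g_def)
qed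

lemma final_ineq:
  fixes lam mu t D p X Z dc :: real
  assumes "lam > 0" "mu > 0" "X \<ge> 0" "Z \<ge> 0" "D \<ge> 0" "t \<ge> 0"
    and h1: "lam * t^2 \<le> mu * (dc - p)" and h2: "dc \<le> D * (lam * X)" and h3: "D \<le> Z * t"
    and h4: "2 * mu * Z^2 \<le> lam"
  shows "p + D^2 \<le> lam * mu * Z^2 * X^2 / 2"
proof -
  have s1: "mu * dc \<le> mu * (D * (lam * X))" using h2 assms(2) by simp
  have s2: "mu * (D * (lam * X)) \<le> mu * (Z * t * (lam * X))"
    using h3 assms by (intro mult_left_mono mult_right_mono) auto
  have s3: "mu * D^2 \<le> mu * (Z * t)^2"
    using h3 assms by (intro mult_left_mono power_mono) auto
  have s4: "mu * (Z * t)^2 \<le> lam * t^2 / 2"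
  proof -
    have "mu * (Z * t)^2 = (2 * mu * Z^2) * t^2 / 2" by (simp add: power_mult_distrib)
    also have "\<dots> \<le> lam * t^2 / 2" using h4 by (intro divide_right_mono mult_right_mono) auto
    finally show ?thesis .
  qed
  have s5: "0 \<le> lam / 2 * (t - mu * X * Z)^2" using assms by simp
  have "mu * (p + D^2) \<le> mu * (lam * mu * Z^2 * X^2 / 2)"
    using h1 s1 s2 s3 s4 s5 by (simp add: power2_eq_square algebra_simps)
  then show ?thesis using assms(2) by simp
qed




lemma adj: "(A *v x) \<bullet> y = x \<bullet> (transpose A *v y)" for A :: "real^'n^'m"
proof -
  have "x \<bullet> (transpose A *v y) = (y v* A) \<bullet> x" by (simp add: inner_commute)
  also have "\<dots> = y \<bullet> (A *v x)" by (rule dot_lmul_matrix)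
  finally show ?thesis by (simp add: inner_commute)
qed

theorem theorem3:
  fixes K :: "real^'n^'n" and St :: "real^'m^'n" and lam mu :: real
    and f :: "real^'n \<Rightarrow> real" and ws :: "real^'n" and as :: "real^'m"
  assumes K_psd: "psd K"
    and lam_pos: "lam > 0"
    and f_convex: "convex_on UNIV f"
    and f_diff: "\<forall>x. f differentiable (at x)"
    and f_lip: "\<forall>x y. norm (grad f x - grad f y) \<le> mu * norm (x - y)"
    and ws_min: "\<forall>w. f (K *v ws) + lam / 2 * (ws \<bullet> (K *v ws)) \<le> f (K *v w) + lam / 2 * (w \<bullet> (K *v w))"
    and as_min: "\<forall>a. f ((K ** St) *v as) + lam / 2 * (as \<bullet> ((transpose St ** K ** St) *v as))
                    \<le> f ((K ** St) *v a) + lam / 2 * (a \<bullet> ((transpose St ** K ** St) *v a))"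
    and lam_ge: "lam \<ge> 2 * mu * (Zf f lam (msqrt K) (msqrt K ** St))^2"
  shows "norm (msqrt K *v ((- (1 / lam)) *\<^sub>R grad f ((K ** St) *v as) - ws))
           \<le> sqrt (mu / (2 * lam)) * Zf f lam (msqrt K) (msqrt K ** St) * norm (msqrt K *v ws)"
proof -
  define B where "B = msqrt K"
  have Bp: "psd B" and BB: "B ** B = K" using msqrt_char[OF K_psd] by (auto simp: B_def)
  have Bs: "transpose B = B" using Bp by (simp add: psd_def)
  have Bsa: "\<And>x y. (B *v x) \<bullet> y = x \<bullet> (B *v y)" using selfadj_of_sym[OF Bs] by blast
  have Ks: "transpose K = K" using K_psd by (simp add: psd_def)
  have BBv: "\<And>x. B *v (B *v x) = K *v x" using BB by (simp add: matrix_vector_mul_assoc)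
  define S where "S = B ** St"
  define M where "M = transpose S ** S"
  define X where "X = pinv M"
  have Ms: "transpose M = M" by (simp add: M_def matrix_transpose_mul)
  have Xs: "transpose X = X" and MXM: "M ** X ** M = M" and XMX: "X ** M ** X = X"
    using pinv_char[OF Ms] by (auto simp: X_def)
  define P where "P = S ** X ** transpose S"
  have Ps: "transpose P = P" by (simp add: P_def matrix_transpose_mul Xs matrix_mul_assoc)
  have PP: "P ** P = P"
  proof -
    have "P ** P = S ** (X ** M ** X) ** transpose S" by (simp add: P_def M_def matrix_mul_assoc)
    then show ?thesis using XMX by (simp add: P_def)
  qed
  have Psa: "\<And>x y. (P *v x) \<bullet> y = x \<bullet> (P *v y)" using selfadj_of_sym[OF Ps] by blast
  have Pid: "\<And>x. P *v (P *v x) = P *v x" using PP by (simp add: matrix_vector_mul_assoc)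
  have PuPu: "\<And>x. (P *v x) \<bullet> (P *v x) = x \<bullet> (P *v x)"
  proof -
    fix x have "(P *v x) \<bullet> (P *v x) = x \<bullet> (P *v (P *v x))" by (rule Psa)
    then show "(P *v x) \<bullet> (P *v x) = x \<bullet> (P *v x)" by (simp only: Pid)
  qed
  have PS: "\<And>a. P *v (S *v a) = S *v a"
  proof -
    fix a
    define y where "y = X *v (M *v a) - a"
    have My: "M *v y = 0" using MXM
      by (simp add: y_def matrix_vector_mult_diff_distrib matrix_vector_mul_assoc matrix_mul_assoc)
    have "(S *v y) \<bullet> (S *v y) = y \<bullet> (M *v y)" by (simp add: adj M_def matrix_vector_mul_assoc)
    then have "S *v y = 0" using My by simp
    then have "S *v (X *v (M *v a)) = S *v a" by (simp add: y_def matrix_vector_mult_diff_distrib)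
    then show "P *v (S *v a) = S *v a" by (simp add: P_def M_def matrix_vector_mul_assoc matrix_mul_assoc)
  qed
  have PT0: "\<And>r. transpose S *v r = 0 \<Longrightarrow> P *v r = 0"
    by (simp add: P_def matrix_vector_mul_assoc[symmetric])
  define zs where "zs = grad f (K *v ws)"
  define zh where "zh = grad f ((K ** St) *v as)"
  define xs where "xs = B *v ws"
  define xh where "xh = S *v as"
  have Kws: "K *v ws = B *v xs" by (simp add: xs_def BBv)
  have KSt: "(K ** St) *v as = B *v xh"
    by (simp add: xh_def S_def BBv matrix_vector_mul_assoc[symmetric])
  have mu0: "mu \<ge> 0"
  proof -
    have "norm (grad f (axis undefined 1) - grad f 0) \<le> mu * norm (axis undefined (1::real) - 0 :: real^'n)"
      using f_lip by blast
    then have "norm (grad f (axis undefined 1) - grad f 0) \<le> mu" by simp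
    then show ?thesis using norm_ge_zero order.trans by blast
  qed
  have opt1: "transpose K *v grad f (K *v ws) + lam *\<^sub>R (K *v ws) = 0"
    by (rule opt_cond[OF f_diff f_lip Ks ws_min])
  have Bzs: "B *v zs = - lam *\<^sub>R xs"
  proof -
    define v where "v = zs + lam *\<^sub>R ws"
    have Kv: "K *v v = 0" using opt1 Ks
      by (simp add: v_def zs_def matrix_vector_right_distrib matrix_vector_mult_scaleR)
    have "(B *v v) \<bullet> (B *v v) = v \<bullet> (B *v (B *v v))" by (rule Bsa)
    then have "(B *v v) \<bullet> (B *v v) = v \<bullet> (K *v v)" by (simp only: BBv)
    then have "B *v v = 0" using Kv by simp
    then show ?thesis by (simp add: v_def xs_def matrix_vector_right_distrib matrix_vector_mult_scaleR eq_neg_iff_add_eq_0)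
  qed
  have Qs: "transpose (transpose St ** K ** St) = transpose St ** K ** St"
    by (simp add: matrix_transpose_mul Ks matrix_mul_assoc)
  have opt2: "transpose (K ** St) *v grad f ((K ** St) *v as) + lam *\<^sub>R ((transpose St ** K ** St) *v as) = 0"
    by (rule opt_cond[OF f_diff f_lip Qs as_min])
  have T1: "transpose S ** B = transpose (K ** St)"
    by (simp add: S_def matrix_transpose_mul Bs Ks BB matrix_mul_assoc[symmetric])
  have T2: "transpose S ** S = transpose St ** K ** St"
    by (simp add: S_def matrix_transpose_mul Bs) (metis BB matrix_mul_assoc)
  define r where "r = B *v zh + lam *\<^sub>R xh"
  have Sr: "transpose S *v r = 0"
  proof -
    have "transpose S *v r = (transpose S ** B) *v zh + lam *\<^sub>R ((transpose S ** S) *v as)"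
      by (simp add: r_def xh_def matrix_vector_right_distrib matrix_vector_mult_scaleR matrix_vector_mul_assoc)
    then show ?thesis using opt2 T1 T2 by (simp add: zh_def)
  qed
  have PBzh: "P *v (B *v zh) = - lam *\<^sub>R xh"
  proof -
    have "P *v r = 0" using PT0[OF Sr] .
    moreover have "P *v xh = xh" using PS by (simp add: xh_def)
    ultimately show ?thesis
      by (simp add: r_def matrix_vector_right_distrib matrix_vector_mult_scaleR eq_neg_iff_add_eq_0)
  qed

  have decomp: "\<And>x. x \<bullet> x = (P *v x) \<bullet> (P *v x) + (x - P *v x) \<bullet> (x - P *v x)"
  proof -
    fix x
    have "(x - P *v x) \<bullet> (x - P *v x) = x \<bullet> x - 2 * (x \<bullet> (P *v x)) + (P *v x) \<bullet> (P *v x)"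
      using Psa[of x x] by (simp add: inner_diff_left inner_diff_right inner_commute)
    then show "x \<bullet> x = (P *v x) \<bullet> (P *v x) + (x - P *v x) \<bullet> (x - P *v x)" using PuPu[of x] by simp
  qed
  define Dl where "Dl = zh - zs"
  define u where "u = B *v Dl"
  define Pu where "Pu = P *v u"
  define d where "d = u - Pu"
  define c where "c = B *v zs - P *v (B *v zs)"
  have xs': "xs = (- (1 / lam)) *\<^sub>R (B *v zs)" using Bzs lam_pos by simp
  have Bneg: "\<And>x. B *v (- x) = - (B *v x)" using matrix_vector_mult_diff_distrib[of B 0] by simp
  have Pneg: "\<And>x. P *v (- x) = - (P *v x)" using matrix_vector_mult_diff_distrib[of P 0] by simp
  have lhs: "msqrt K *v ((- (1 / lam)) *\<^sub>R grad f ((K ** St) *v as) - ws) = (- (1 / lam)) *\<^sub>R u"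
  proof -
    have "msqrt K *v ((- (1 / lam)) *\<^sub>R grad f ((K ** St) *v as) - ws) = (- (1 / lam)) *\<^sub>R (B *v zh) - xs"
      by (simp add: B_def[symmetric] zh_def[symmetric] xs_def matrix_vector_mult_diff_distrib matrix_vector_mult_scaleR Bneg)
    also have "\<dots> = (- (1 / lam)) *\<^sub>R u"
      by (subst xs') (simp add: u_def Dl_def matrix_vector_mult_diff_distrib scaleR_diff_right)
    finally show ?thesis .
  qed
  have nlhs: "norm (msqrt K *v ((- (1 / lam)) *\<^sub>R grad f ((K ** St) *v as) - ws)) = norm u / lam"
    unfolding lhs using lam_pos by simp
  define Z where "Z = Zf f lam B S"
  have Zst: "Zf f lam (msqrt K) (msqrt K ** St) = Z" by (simp add: Z_def B_def S_def)
  have gxs: "grad f (B *v xs) = zs" using Kws zs_def by simp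
  have gxh: "grad f (B *v xh) = zh" using KSt zh_def by simp
  have grow: "f (B *v y) + lam / 2 * (norm y)^2 \<ge> f (B *v xs) + lam / 2 * (norm xs)^2 + lam / 2 * (norm (y - xs))^2" for y
  proof -
    have t: "f (B *v y) \<ge> f (B *v xs) + grad f (B *v xs) \<bullet> (B *v y - B *v xs)"
      by (rule tangent_ineq[OF f_convex f_diff])
    have "grad f (B *v xs) \<bullet> (B *v y - B *v xs) = zs \<bullet> (B *v (y - xs))"
      by (simp add: gxs matrix_vector_mult_diff_distrib)
    also have "\<dots> = (B *v zs) \<bullet> (y - xs)" by (simp add: Bsa)
    also have "\<dots> = - lam * (xs \<bullet> (y - xs))" by (simp add: Bzs)
    finally have t2: "grad f (B *v xs) \<bullet> (B *v y - B *v xs) = - lam * (xs \<bullet> (y - xs))" .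
    have n: "(norm y)^2 = (norm xs)^2 + 2 * (xs \<bullet> (y - xs)) + (norm (y - xs))^2"
    proof -
      have "y = xs + (y - xs)" by simp
      then have "(norm y)^2 = (norm (xs + (y - xs)))^2" by metis
      also have "\<dots> = (norm xs)^2 + 2 * (xs \<bullet> (y - xs)) + (norm (y - xs))^2"
        unfolding power2_norm_eq_inner by (simp add: inner_diff_left inner_diff_right inner_commute)
      finally show ?thesis .
    qed
    have n2: "lam / 2 * (norm y)^2 = lam / 2 * (norm xs)^2 + lam * (xs \<bullet> (y - xs)) + lam / 2 * (norm (y - xs))^2"
      unfolding n by (simp add: distrib_left)
    have t3: "grad f (B *v xs) \<bullet> (B *v y - B *v xs) = - (lam * (xs \<bullet> (y - xs)))" using t2 by simp
    show ?thesis using t t3 n2 by linarith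
  qed
  have some_eq: "(SOME x. \<forall>y. f (B *v x) + lam / 2 * (norm x)^2 \<le> f (B *v y) + lam / 2 * (norm y)^2) = xs"
  proof (rule some_equality)
    show "\<forall>y. f (B *v xs) + lam / 2 * (norm xs)^2 \<le> f (B *v y) + lam / 2 * (norm y)^2"
      using grow lam_pos by (smt (verit) zero_le_power2 mult_nonneg_nonneg divide_nonneg_pos)
    fix x assume "\<forall>y. f (B *v x) + lam / 2 * (norm x)^2 \<le> f (B *v y) + lam / 2 * (norm y)^2"
    then have "f (B *v x) + lam / 2 * (norm x)^2 \<le> f (B *v xs) + lam / 2 * (norm xs)^2" by blast
    with grow[of x] have "lam / 2 * (norm (x - xs))^2 \<le> 0" by simp
    then have "(norm (x - xs))^2 \<le> 0" using lam_pos by (simp add: mult_le_0_iff)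
    then show "x = xs" by simp
  qed
  define N where "N = B ** (mat 1 - S ** pinv (transpose S ** S) ** transpose S) ** transpose B"
  define Zset where "Zset = insert 0 {sqrt ((\<Delta> \<bullet> (N *v \<Delta>)) / (norm \<Delta>)^2) | \<Delta>.
                          \<Delta> \<in> (\<lambda>d. d - zs) ` conj_dom f \<and> \<Delta> \<noteq> 0}"
  have Zeq: "Z = Sup Zset" unfolding Z_def Zf_def Let_def some_eq gxs Zset_def N_def ..
  have Nv: "N *v x = B *v (B *v x - P *v (B *v x))" for x
    by (simp add: N_def P_def X_def M_def Bs matrix_vector_mul_assoc[symmetric] matrix_vector_mult_diff_rdistrib)
  obtain C where C: "C > 0" "\<And>x. norm (N *v x) \<le> norm x * C"
    using bounded_linear.pos_bounded[OF matrix_vector_mul_bounded_linear[of N]] by blast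
  have bdd: "bdd_above Zset"
  proof (rule bdd_aboveI[of _ "sqrt C"])
    fix z assume "z \<in> Zset"
    then consider "z = 0" | \<Delta> where "z = sqrt ((\<Delta> \<bullet> (N *v \<Delta>)) / (norm \<Delta>)^2)" "\<Delta> \<noteq> 0"
      unfolding Zset_def by blast
    then show "z \<le> sqrt C"
    proof cases
      case 1 then show ?thesis using C by simp
    next
      case 2
      have "\<Delta> \<bullet> (N *v \<Delta>) \<le> norm \<Delta> * norm (N *v \<Delta>)" by (rule norm_cauchy_schwarz)
      also have "\<dots> \<le> norm \<Delta> * (norm \<Delta> * C)" using C(2) by (simp add: mult_left_mono)
      finally have "\<Delta> \<bullet> (N *v \<Delta>) \<le> C * (norm \<Delta>)^2" by (simp add: power2_eq_square algebra_simps)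
      then have "(\<Delta> \<bullet> (N *v \<Delta>)) / (norm \<Delta>)^2 \<le> C" using 2(2) by (simp add: divide_le_eq)
      then show ?thesis using 2(1) by simp
    qed
  qed
  have Z0: "0 \<le> Z" unfolding Zeq by (rule cSup_upper[OF _ bdd]) (simp add: Zset_def)

  have RHS0: "0 \<le> sqrt (mu / (2 * lam)) * Z * norm (B *v ws)"
    using mu0 lam_pos Z0 by simp
  show ?thesis
  proof (cases "Dl = 0")
    case True
    then have "u = 0" by (simp add: u_def)
    then show ?thesis using nlhs RHS0 Zst by (simp add: B_def)
  next
    case False
    have PuPu': "u \<bullet> Pu = Pu \<bullet> Pu" using PuPu[of u] by (simp add: Pu_def)
    have uu: "u \<bullet> u = Pu \<bullet> Pu + d \<bullet> d" using decomp[of u] by (simp add: Pu_def d_def)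
    have dd: "Dl \<bullet> (N *v Dl) = d \<bullet> d"
    proof -
      have "Dl \<bullet> (N *v Dl) = Dl \<bullet> (B *v d)" by (simp add: Nv u_def Pu_def d_def)
      also have "\<dots> = u \<bullet> d" by (simp add: u_def Bsa)
      also have "\<dots> = d \<bullet> d" using uu PuPu' by (simp add: d_def inner_diff_right inner_diff_left)
      finally show ?thesis .
    qed
    have zh_dom: "zh \<in> conj_dom f"
      unfolding conj_dom_def
    proof (intro CollectI exI allI)
      fix w
      have "f w \<ge> f (B *v xh) + grad f (B *v xh) \<bullet> (w - B *v xh)"
        by (rule tangent_ineq[OF f_convex f_diff])
      then show "w \<bullet> zh - f w \<le> (B *v xh) \<bullet> zh - f (B *v xh)"
        by (simp add: gxh inner_diff_right inner_commute)
    qed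
    have "sqrt ((Dl \<bullet> (N *v Dl)) / (norm Dl)^2) \<in> Zset"
      unfolding Zset_def using zh_dom False by (auto simp: Dl_def)
    then have "sqrt ((Dl \<bullet> (N *v Dl)) / (norm Dl)^2) \<le> Z" unfolding Zeq by (rule cSup_upper[OF _ bdd])
    moreover have "sqrt ((Dl \<bullet> (N *v Dl)) / (norm Dl)^2) = norm d / norm Dl"
      unfolding dd by (simp add: real_sqrt_divide power2_norm_eq_inner[symmetric])
    ultimately have hD: "norm d \<le> Z * norm Dl" using False by (simp add: divide_le_eq)
    have cc0: "(norm (grad f (B *v xh) - grad f (B *v xs)))^2
        \<le> mu * ((grad f (B *v xh) - grad f (B *v xs)) \<bullet> (B *v xh - B *v xs))"
      by (rule cocoercive[OF f_convex f_diff f_lip])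
    have "(grad f (B *v xh) - grad f (B *v xs)) \<bullet> (B *v xh - B *v xs) = u \<bullet> (xh - xs)"
      by (simp add: gxh gxs Dl_def[symmetric] u_def Bsa matrix_vector_mult_diff_distrib)
    then have cc: "(norm Dl)^2 \<le> mu * (u \<bullet> (xh - xs))" using cc0 by (simp add: gxh gxs Dl_def)
    have lxh: "lam *\<^sub>R (xh - xs) = c - Pu"
    proof -
      have a1: "lam *\<^sub>R xh = - (P *v (B *v zh))" using PBzh by simp
      have a2: "lam *\<^sub>R xs = - (B *v zs)" using Bzs by simp
      have a3: "B *v zh = u + B *v zs" by (simp add: u_def Dl_def matrix_vector_mult_diff_distrib)
      show ?thesis unfolding scaleR_diff_right a1 a2 a3
        by (simp add: c_def Pu_def matrix_vector_right_distrib)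
    qed
    have lin: "lam * (u \<bullet> (xh - xs)) = u \<bullet> c - u \<bullet> Pu"
    proof -
      have "lam * (u \<bullet> (xh - xs)) = u \<bullet> (lam *\<^sub>R (xh - xs))" by simp
      then show ?thesis unfolding lxh by (simp add: inner_diff_right)
    qed
    have Pc: "P *v c = 0" by (simp add: c_def matrix_vector_mult_diff_distrib Pid)
    have udc: "u \<bullet> c = d \<bullet> c"
    proof -
      have "Pu \<bullet> c = u \<bullet> (P *v c)" by (simp add: Pu_def Psa)
      then have "Pu \<bullet> c = 0" using Pc by simp
      then show ?thesis by (simp add: d_def inner_diff_left)
    qed
    have cn: "norm c \<le> lam * norm xs"
    proof -
      have "c = (- lam) *\<^sub>R (xs - P *v xs)"
        by (simp add: c_def Bzs matrix_vector_mult_scaleR scaleR_diff_right Pneg)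
      then have "norm c = lam * norm (xs - P *v xs)" using lam_pos by simp
      moreover have "norm (xs - P *v xs) \<le> norm xs"
      proof -
        have "(norm (xs - P *v xs))^2 \<le> (norm xs)^2"
          using decomp[of xs] by (simp add: power2_norm_eq_inner)
        then show ?thesis by (simp add: power_mono_iff)
      qed
      ultimately show ?thesis using lam_pos by simp
    qed
    have h2: "u \<bullet> c \<le> norm d * (lam * norm xs)"
    proof -
      have "u \<bullet> c \<le> norm d * norm c" unfolding udc by (rule norm_cauchy_schwarz)
      also have "\<dots> \<le> norm d * (lam * norm xs)" using cn by (simp add: mult_left_mono)
      finally show ?thesis .
    qed
    have h1: "lam * (norm Dl)^2 \<le> mu * (u \<bullet> c - u \<bullet> Pu)"
    proof -
      have "lam * (norm Dl)^2 \<le> lam * (mu * (u \<bullet> (xh - xs)))" using cc lam_pos by simp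
      also have "\<dots> = mu * (lam * (u \<bullet> (xh - xs)))" by simp
      finally show ?thesis unfolding lin .
    qed
    have mup: "mu > 0"
    proof (rule ccontr)
      assume "\<not> mu > 0"
      then have "mu = 0" using mu0 by simp
      then have "lam * (norm Dl)^2 \<le> 0" using h1 by simp
      then show False using False lam_pos by (simp add: mult_le_0_iff)
    qed
    have h4: "2 * mu * Z^2 \<le> lam" using lam_ge Zst by simp
    have fin: "u \<bullet> Pu + (norm d)^2 \<le> lam * mu * Z^2 * (norm xs)^2 / 2"
      by (rule final_ineq[OF lam_pos mup norm_ge_zero Z0 norm_ge_zero norm_ge_zero h1 h2 hD h4])
    have "(norm u)^2 = u \<bullet> Pu + (norm d)^2" using uu PuPu' by (simp add: power2_norm_eq_inner)
    then have nu2: "(norm u)^2 \<le> lam * mu * Z^2 * (norm xs)^2 / 2" using fin by simp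
    have "lam * mu * Z^2 * (norm xs)^2 / 2 = (lam * (sqrt (mu / (2 * lam)) * Z * norm xs))^2"
      using lam_pos mu0 by (simp add: power_mult_distrib) (simp add: power2_eq_square)
    with nu2 have sq: "(norm u)^2 \<le> (lam * (sqrt (mu / (2 * lam)) * Z * norm xs))^2" by simp
    have nn: "0 \<le> lam * (sqrt (mu / (2 * lam)) * Z * norm xs)" using lam_pos mu0 Z0 by simp
    have "norm u \<le> lam * (sqrt (mu / (2 * lam)) * Z * norm xs)" using power2_le_imp_le[OF sq nn] .
    then have "norm u / lam \<le> sqrt (mu / (2 * lam)) * Z * norm xs"
      using lam_pos by (simp add: divide_le_eq mult.commute)
    then show ?thesis using nlhs Zst by (simp add: xs_def B_def)
  qed
qed

end
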